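(* Let $G=(V,E)$ be a graph and let $U,U^*\subseteq V$ be dominating sets of $G$. For every vertex $v\in V\setminus(U\cup U^* )$ choose a neighbour $u_v\in U$ of $v$. Let $\tilde G$ be the graph obtained from $G$ by contracting the edges $vu_v$ for all $v\in V\setminus(U\cup U^* )$; explicitly, $V(\tilde G)=U\cup U^*$, where each $x\in U$ represents the set $B_x=\{x\}\cup\{v\in V\setminus(U\cup U^* ): u_v=x\}$ and each $x\in U^*\setminus U$ represents $B_x=\{x\}$, and two distinct vertices $x,y$ of $\tilde G$ are adjacent iff $G$ has an edge between $B_x$ and $B_y$. Let $\{S_1,\dots,S_k\}$ be any division of $\tilde G$. Then for every $i\in\{1,\dots,k\}$, the set $(U\setminus\mathrm{int}(S_i))\cup(U^*\cap S_i)$ is a dominating set of $G$.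
   Context: A dominating set of $G$ is a set $D\subseteq V$ such that every vertex of $G$ is in $D$ or has a neighbour in $D$. For a collection $\mathcal S=\{S_1,\dots,S_k\}$ of subsets of the vertex set of a graph $H$, the boundary of $S_i$ is $\partial S_i=S_i\cap\bigcup_{j\ne i}S_j$ and its interior is $\mathrm{int}(S_i)=S_i\setminus\partial S_i$. A division of $H$ is a collection $\{S_1,\dots,S_k\}$ of subsets of $V(H)$ such that (a) every vertex and every edge of $H$ belongs to some induced subgraph $H[S_i]$, and (b) for every $i$ and every $v\in\mathrm{int}(S_i)$, all neighbours of $v$ in $H$ lie in $S_i$. *)

theory Defs
  imports Main
begin

definition graph :: "'a set \<Rightarrow> ('a \<Rightarrow> 'a \<Rightarrow> bool) \<Rightarrow> bool" where
  "graph V E \<longleftrightarrow> finite V \<and> (\<forall>x y. E x y \<longrightarrow> x \<in> V \<and> y \<in> V)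
     \<and> (\<forall>x y. E x y \<longrightarrow> E y x) \<and> (\<forall>x. \<not> E x x)"

definition dominating :: "'a set \<Rightarrow> ('a \<Rightarrow> 'a \<Rightarrow> bool) \<Rightarrow> 'a set \<Rightarrow> bool" where
  "dominating V E D \<longleftrightarrow> D \<subseteq> V \<and> (\<forall>v\<in>V. v \<in> D \<or> (\<exists>u\<in>D. E v u))"

definition boundary :: "'a set set \<Rightarrow> 'a set \<Rightarrow> 'a set" where
  "boundary SS S = S \<inter> \<Union>(SS - {S})"

definition interior :: "'a set set \<Rightarrow> 'a set \<Rightarrow> 'a set" where
  "interior SS S = S - boundary SS S"

definition division :: "'a set \<Rightarrow> ('a \<Rightarrow> 'a \<Rightarrow> bool) \<Rightarrow> 'a set set \<Rightarrow> bool" where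
  "division W F SS \<longleftrightarrow> finite SS \<and> (\<forall>S\<in>SS. S \<subseteq> W)
     \<and> (\<forall>v\<in>W. \<exists>S\<in>SS. v \<in> S)
     \<and> (\<forall>x y. F x y \<longrightarrow> (\<exists>S\<in>SS. x \<in> S \<and> y \<in> S))
     \<and> (\<forall>S\<in>SS. \<forall>v\<in>interior SS S. \<forall>w. F v w \<longrightarrow> w \<in> S)"

text \<open>Branch sets of the contraction: u assigns to each v in V - (U \<union> Us) a neighbour in U.\<close>
definition branch :: "'a set \<Rightarrow> 'a set \<Rightarrow> 'a set \<Rightarrow> ('a \<Rightarrow> 'a) \<Rightarrow> 'a \<Rightarrow> 'a set" where
  "branch V U Us u x = (if x \<in> U then {x} \<union> {v \<in> V - (U \<union> Us). u v = x} else {x})"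

definition contracted_edge ::
  "'a set \<Rightarrow> ('a \<Rightarrow> 'a \<Rightarrow> bool) \<Rightarrow> 'a set \<Rightarrow> 'a set \<Rightarrow> ('a \<Rightarrow> 'a) \<Rightarrow> 'a \<Rightarrow> 'a \<Rightarrow> bool" where
  "contracted_edge V E U Us u x y \<longleftrightarrow> x \<in> U \<union> Us \<and> y \<in> U \<union> Us \<and> x \<noteq> y \<and>
     (\<exists>a\<in>branch V U Us u x. \<exists>b\<in>branch V U Us u y. E a b)"

end

theory Submission
  imports Defs
begin

lemma branch_self: "x \<in> branch V U Us u x"
  by (simp add: branch_def)

theorem mainTheorem7:
  fixes V :: "'a set" and E :: "'a \<Rightarrow> 'a \<Rightarrow> bool" and U Us :: "'a set"
    and u :: "'a \<Rightarrow> 'a" and SS :: "'a set set"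
  assumes "graph V E"
    and "dominating V E U" and "dominating V E Us"
    and "\<forall>v \<in> V - (U \<union> Us). u v \<in> U \<and> E v (u v)"
    and "division (U \<union> Us) (contracted_edge V E U Us u) SS"
  shows "\<forall>S\<in>SS. dominating V E ((U - interior SS S) \<union> (Us \<inter> S))"
proof
  fix S assume S: "S \<in> SS"
  have irr: "\<And>x. \<not> E x x" and sym: "\<And>x y. E x y \<Longrightarrow> E y x"
    using assms(1) unfolding graph_def by blast+
  have UV: "U \<subseteq> V" and UsV: "Us \<subseteq> V"
    using assms(2,3) unfolding dominating_def by auto
  have dU: "\<And>v. v \<in> V \<Longrightarrow> v \<in> U \<or> (\<exists>w\<in>U. E v w)"
    and dUs: "\<And>v. v \<in> V \<Longrightarrow> v \<in> Us \<or> (\<exists>w\<in>Us. E v w)"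
    using assms(2,3) unfolding dominating_def by auto
  have int: "\<And>v w. v \<in> interior SS S \<Longrightarrow> contracted_edge V E U Us u v w \<Longrightarrow> w \<in> S"
    using assms(5) S unfolding division_def by blast
  have intS: "interior SS S \<subseteq> S" unfolding interior_def by auto
  have ce: "\<And>x y a b. x \<in> U \<union> Us \<Longrightarrow> y \<in> U \<union> Us \<Longrightarrow> x \<noteq> y \<Longrightarrow>
      a \<in> branch V U Us u x \<Longrightarrow> b \<in> branch V U Us u y \<Longrightarrow> E a b \<Longrightarrow> contracted_edge V E U Us u x y"
    unfolding contracted_edge_def by blast
  let ?D = "(U - interior SS S) \<union> (Us \<inter> S)"
  show "dominating V E ?D"
    unfolding dominating_def
  proof (intro conjI ballI)
    show "?D \<subseteq> V" using UV UsV by auto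
  next
    fix v assume v: "v \<in> V"
    show "v \<in> ?D \<or> (\<exists>w\<in>?D. E v w)"
    proof (cases "v \<in> U")
      case True
      show ?thesis
      proof (cases "v \<in> interior SS S")
        case False then show ?thesis using True by auto
      next
        case vi: True
        from dUs[OF v] show ?thesis
        proof
          assume "v \<in> Us" then show ?thesis using vi intS by auto
        next
          assume "\<exists>w\<in>Us. E v w"
          then obtain w where w: "w \<in> Us" "E v w" by blast
          have "v \<noteq> w" using w irr by auto
          then have "contracted_edge V E U Us u v w"
            using ce[OF _ _ _ branch_self branch_self] True w by auto
          then have "w \<in> S" using int vi by blast
          then show ?thesis using w by auto
        qed
      qed
    next
      case nU: False
      show ?thesis
      proof (cases "v \<in> Us")
        case True
        show ?thesis
        proof (cases "v \<in> S")
          case True then show ?thesis using \<open>v \<in> Us\<close> by auto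
        next
          case nS: False
          from dU[OF v] nU obtain w where w: "w \<in> U" "E v w" by blast
          have "w \<notin> interior SS S"
          proof
            assume wi: "w \<in> interior SS S"
            have "v \<noteq> w" using w irr by auto
            then have "contracted_edge V E U Us u w v"
              using ce[OF _ _ _ branch_self branch_self] True w sym by auto
            then show False using int wi nS by blast
          qed
          then show ?thesis using w by auto
        qed
      next
        case nUs: False
        let ?x = "u v"
        have x: "?x \<in> U" "E v ?x" using assms(4) v nU nUs by auto
        show ?thesis
        proof (cases "?x \<in> interior SS S")
          case False then show ?thesis using x by auto
        next
          case xi: True
          from dUs[OF v] nUs obtain w where w: "w \<in> Us" "E v w" by blast
          show ?thesis
          proof (cases "w = ?x")
            case True then show ?thesis using w xi intS by auto
          next
            case False
            have vb: "v \<in> branch V U Us u ?x"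
              using x v nU nUs by (simp add: branch_def)
            have "contracted_edge V E U Us u ?x w"
              using ce[OF _ _ _ vb branch_self] x w False by auto
            then have "w \<in> S" using int xi by blast
            then show ?thesis using w by auto
          qed
        qed
      qed
    qed
  qed
qed

end
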